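(* Let $d\geq3$ and $h\geq 2$. Then \[ \nu_2(T'(d,h))=\begin{cases}\dfrac{2\big((d-1)^{h+1}-(d-1)\big)}{(d-1)^2-1} & \text{if } h \text{ is even},\\[2ex] \dfrac{2\big((d-1)^{h+1}-1\big)}{(d-1)^2-1} & \text{if } h \text{ is odd}.\end{cases} \]
   Context: $T'(d,h)$ is the rooted tree of depth $h$ in which the root has $d-1$ children, every non-root vertex at depth less than $h$ has $d-1$ children (so degree $d$), and all leaves are at depth $h$ (equivalently, the $d$-regular tree of depth $h$ with one principal branch of the root deleted). A $2$-matching of a graph is a set of edges such that every vertex is incident to at most two of them; $\nu_2(G)$ is the maximum size of a $2$-matching of $G$. *)

theory Defs
  imports Complex_Main
begin

text \<open>Vertices of T'(d,h): words over {0..<d-1} of length at most h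
  (the word is the path from the root). The root is the empty word; it has d-1
  children, every vertex at depth < h has d-1 children, leaves are at depth h.\<close>

definition tree_verts :: "nat \<Rightarrow> nat \<Rightarrow> nat list set" where
  "tree_verts d h = {xs. length xs \<le> h \<and> (\<forall>i\<in>set xs. i < d - 1)}"

definition tree_edges :: "nat \<Rightarrow> nat \<Rightarrow> nat list set set" where
  "tree_edges d h = {{xs, xs @ [i]} | xs i. xs \<in> tree_verts d h \<and> length xs < h \<and> i < d - 1}"

definition two_matching :: "'a set set \<Rightarrow> 'a set set \<Rightarrow> bool" where
  "two_matching E M \<longleftrightarrow> M \<subseteq> E \<and> (\<forall>v. card {e\<in>M. v \<in> e} \<le> 2)"

definition nu2 :: "'a set set \<Rightarrow> nat" where
  "nu2 E = Max {card M | M. two_matching E M}"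

end

theory Submission
  imports Defs
begin

fun B :: "nat \<Rightarrow> nat \<Rightarrow> nat" where
  "B q 0 = 0"
| "B q (Suc 0) = 2"
| "B q (Suc (Suc n)) = 2 * q ^ Suc n + B q n"

lemma B_real:
  "real (B q n) * ((real q)^2 - 1) =
   (if even n then 2 * ((real q) ^ (n + 1) - real q) else 2 * ((real q) ^ (n + 1) - 1))"
  by (induction q n rule: B.induct) (auto simp: algebra_simps power2_eq_square)

definition lev :: "nat list set \<Rightarrow> nat" where
  "lev e = Min (length ` e)"

lemma lev_edge[simp]: "lev {xs, xs @ [i]} = length xs"
  unfolding lev_def by simp

lemma edge_inj:
  fixes xs ys :: "nat list"
  assumes "{xs, xs @ [i]} = {ys, ys @ [j]}"
  shows "xs = ys \<and> i = j"
proof -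
  have "length xs = length ys" using lev_edge[of xs i] lev_edge[of ys j] assms by metis
  moreover have "xs \<in> {ys, ys @ [j]}" using assms by blast
  ultimately have "xs = ys" by auto
  moreover have "xs @ [i] \<in> {ys, ys @ [j]}" using assms by blast
  ultimately show ?thesis by auto
qed

lemma finite_verts: "finite (tree_verts d h)"
proof -
  have "tree_verts d h = {xs. set xs \<subseteq> {..<d-1} \<and> length xs \<le> h}"
    unfolding tree_verts_def by auto
  thus ?thesis using finite_lists_length_le[of "{..<d-1}" h] by simp
qed

lemma card_level:
  assumes "k \<le> h"
  shows "card {xs \<in> tree_verts d h. length xs = k} = (d-1)^k"
proof -
  have "{xs \<in> tree_verts d h. length xs = k} = {xs. set xs \<subseteq> {..<d-1} \<and> length xs = k}"
    unfolding tree_verts_def using assms by auto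
  thus ?thesis using card_lists_length_eq[of "{..<d-1}" k] by simp
qed

lemma finite_edges: "finite (tree_edges d h)"
proof -
  have "tree_edges d h \<subseteq> (\<lambda>(xs,i). {xs, xs @ [i]}) ` (tree_verts d h \<times> {..<d-1})"
    unfolding tree_edges_def by auto
  thus ?thesis using finite_verts by (meson finite_SigmaI finite_imageI finite_lessThan finite_subset)
qed

lemma levels_sum:
  assumes "M \<subseteq> tree_edges d h"
  shows "card M = (\<Sum>k<h. card {e \<in> M. lev e = k})"
proof -
  have fM: "finite M" using assms finite_edges finite_subset by blast
  have "lev ` M \<subseteq> {..<h}" using assms unfolding tree_edges_def by auto
  from sum.group[OF fM finite_lessThan this, of "\<lambda>_. 1::nat"]
  show ?thesis by simp
qed

lemma upper_level:
  assumes tm: "two_matching (tree_edges d h) M" and k: "k < h"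
  shows "card {e \<in> M. lev e = k} + (if k = 0 then 0 else card {e \<in> M. lev e = k - 1}) \<le> 2 * (d-1)^k"
proof -
  have Msub: "M \<subseteq> tree_edges d h" using tm unfolding two_matching_def by auto
  have fM: "finite M" using Msub finite_edges finite_subset by blast
  define A where "A = {e \<in> M. lev e = k} \<union> (if k = 0 then {} else {e \<in> M. lev e = k - 1})"
  define V where "V = {xs \<in> tree_verts d h. length xs = k}"
  have fV: "finite V" unfolding V_def using finite_verts by simp
  have cardA: "card A = card {e \<in> M. lev e = k} + (if k = 0 then 0 else card {e \<in> M. lev e = k - 1})"
  proof (cases "k = 0")
    case True thus ?thesis unfolding A_def by simp
  next
    case False
    have "card ({e \<in> M. lev e = k} \<union> {e \<in> M. lev e = k - 1}) =
          card {e \<in> M. lev e = k} + card {e \<in> M. lev e = k - 1}"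
      by (rule card_Un_disjoint) (use fM False in auto)
    thus ?thesis unfolding A_def using False by simp
  qed
  have Asub: "A \<subseteq> (\<Union>v\<in>V. {e \<in> M. v \<in> e})"
  proof
    fix e assume "e \<in> A"
    hence eM: "e \<in> M" and lv: "lev e = k \<or> (k \<noteq> 0 \<and> lev e = k - 1)" unfolding A_def
      by (auto split: if_splits)
    have "e \<in> tree_edges d h" using eM Msub by blast
    then obtain xs i where e: "e = {xs, xs @ [i]}" "xs \<in> tree_verts d h"
      "length xs < h" "i < d - 1" unfolding tree_edges_def by blast
    show "e \<in> (\<Union>v\<in>V. {e \<in> M. v \<in> e})"
    proof (cases "lev e = k")
      case True
      hence "xs \<in> V" using e unfolding V_def by simp
      moreover have "xs \<in> e" using e by simp
      ultimately show ?thesis using eM by (intro UN_I[of xs]) auto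
    next
      case False
      hence "length xs = k - 1" "k \<noteq> 0" using lv e by auto
      hence "xs @ [i] \<in> V" using e unfolding V_def tree_verts_def by auto
      moreover have "xs @ [i] \<in> e" using e by simp
      ultimately show ?thesis using eM by (intro UN_I[of "xs @ [i]"]) auto
    qed
  qed
  have "card A \<le> card (\<Union>v\<in>V. {e \<in> M. v \<in> e})"
  proof (rule card_mono)
    show "finite (\<Union>v\<in>V. {e \<in> M. v \<in> e})" by (rule finite_subset[OF _ fM]) auto
  qed (rule Asub)
  also have "\<dots> \<le> (\<Sum>v\<in>V. card {e \<in> M. v \<in> e})" using card_UN_le[OF fV] by blast
  also have "\<dots> \<le> (\<Sum>v\<in>V. 2)" using tm unfolding two_matching_def by (intro sum_mono) auto
  also have "\<dots> = 2 * (d-1)^k" unfolding V_def using card_level[of k h d] k by simp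
  finally show ?thesis using cardA by simp
qed

lemma sum_bound:
  fixes a :: "nat \<Rightarrow> nat"
  assumes a0: "a 0 \<le> 2" and ak: "\<And>k. 1 \<le> k \<Longrightarrow> k < h \<Longrightarrow> a k + a (k - 1) \<le> 2 * q ^ k"
  shows "n \<le> h \<Longrightarrow> (\<Sum>k<n. a k) \<le> B q n"
proof (induction n rule: less_induct)
  case (less n)
  show ?case
  proof (cases n)
    case 0 then show ?thesis by simp
  next
    case (Suc m)
    show ?thesis
    proof (cases m)
      case 0 then show ?thesis using a0 Suc by simp
    next
      case (Suc p)
      have "(\<Sum>k<p. a k) \<le> B q p" using less Suc \<open>n = Suc m\<close> by simp
      moreover have "a (Suc p) + a (Suc p - 1) \<le> 2 * q ^ Suc p"
        using less(2) Suc \<open>n = Suc m\<close> ak[of "Suc p"] by simp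
      ultimately show ?thesis using Suc \<open>n = Suc m\<close> by simp
    qed
  qed
qed

lemma upper:
  assumes "two_matching (tree_edges d h) M" "h \<ge> 1"
  shows "card M \<le> B (d-1) h"
proof -
  have Msub: "M \<subseteq> tree_edges d h" using assms unfolding two_matching_def by auto
  define a where "a k = card {e \<in> M. lev e = k}" for k
  have a0: "a 0 \<le> 2" using upper_level[OF assms(1), of 0] assms(2) unfolding a_def by simp
  have ak: "a k + a (k - 1) \<le> 2 * (d-1) ^ k" if "1 \<le> k" "k < h" for k
    using upper_level[OF assms(1) that(2)] that(1) unfolding a_def by simp
  have "card M = (\<Sum>k<h. a k)" using levels_sum[OF Msub] unfolding a_def by simp
  also have "\<dots> \<le> B (d-1) h" using sum_bound[of a h "d-1" h] a0 ak by blast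
  finally show ?thesis .
qed

definition M0 :: "nat \<Rightarrow> nat \<Rightarrow> nat list set set" where
  "M0 d h = (\<lambda>(xs,i). {xs, xs @ [i]}) `
     {(xs,i). xs \<in> tree_verts d h \<and> length xs < h \<and> even (h - 1 - length xs) \<and> i < (2::nat)}"

lemma edge_in: "xs \<in> tree_verts d h \<Longrightarrow> length xs < h \<Longrightarrow> i < d - 1 \<Longrightarrow> {xs, xs @ [i]} \<in> tree_edges d h"
  unfolding tree_edges_def by blast

lemma M0_E:
  assumes "e \<in> M0 d h"
  obtains xs i where "e = {xs, xs @ [i]}" "xs \<in> tree_verts d h" "length xs < h"
     "even (h - 1 - length xs)" "i < (2::nat)"
proof -
  from assms obtain p where p: "p \<in> {(xs,i). xs \<in> tree_verts d h \<and> length xs < h \<and> even (h - 1 - length xs) \<and> i < (2::nat)}"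
    "e = (\<lambda>(xs,i). {xs, xs @ [i]}) p" unfolding M0_def by (rule imageE)
  obtain xs i where "p = (xs, i)" by (cases p)
  with p have "xs \<in> tree_verts d h \<and> length xs < h \<and> even (h - 1 - length xs) \<and> i < (2::nat)"
    "e = {xs, xs @ [i]}" by (simp_all only: mem_Collect_eq prod.case)
  thus ?thesis using that by blast
qed

lemma M0_sub: "d \<ge> 3 \<Longrightarrow> M0 d h \<subseteq> tree_edges d h"
proof (rule subsetI)
  fix e assume d: "d \<ge> 3" and "e \<in> M0 d h"
  then obtain xs i where e: "e = {xs, xs @ [i]}" "xs \<in> tree_verts d h" "length xs < h" "i < (2::nat)"
    by (auto elim: M0_E)
  have "i < d - 1" using d e(4) by simp
  thus "e \<in> tree_edges d h" using e edge_in by simp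
qed

lemma M0_tm:
  assumes "d \<ge> 3"
  shows "two_matching (tree_edges d h) (M0 d h)"
  unfolding two_matching_def
proof (intro conjI allI)
  show "M0 d h \<subseteq> tree_edges d h" using M0_sub assms .
  fix v
  let ?S = "{e \<in> M0 d h. v \<in> e}"
  show "card ?S \<le> 2"
  proof (cases "length v < h \<and> even (h - 1 - length v)")
    case True
    have "?S \<subseteq> {{v, v @ [0]}, {v, v @ [1]}}"
    proof
      fix e assume "e \<in> ?S"
      hence eM: "e \<in> M0 d h" and ve: "v \<in> e" by simp_all
      obtain xs i where e0: "e = {xs, xs @ [i]}" "xs \<in> tree_verts d h" "length xs < h"
         "even (h - 1 - length xs)" "i < (2::nat)" using eM by (rule M0_E)
      have e: "e = {xs, xs @ [i]}" "length xs < h" "even (h - 1 - length xs)"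
        "i < 2" "v \<in> e" using e0 ve by simp_all
      show "e \<in> {{v, v @ [0]}, {v, v @ [1]}}"
      proof (cases "v = xs")
        case True thus ?thesis using e by (auto simp: less_2_cases_iff)
      next
        case False
        hence "v = xs @ [i]" using e by auto
        hence "length v = Suc (length xs)" by simp
        hence "h - 1 - length xs = Suc (h - 1 - length v)" using True by linarith
        hence False using e(3) True by simp
        thus ?thesis ..
      qed
    qed
    hence "card ?S \<le> card {{v, v @ [0]}, {v, v @ [1::nat]}}" by (intro card_mono) auto
    also have "\<dots> \<le> 2" by (simp add: card_insert_if)
    finally show ?thesis .
  next
    case False
    have "?S \<subseteq> {{butlast v, v}}"
    proof
      fix e assume "e \<in> ?S"
      hence eM: "e \<in> M0 d h" and ve: "v \<in> e" by simp_all
      obtain xs i where e0: "e = {xs, xs @ [i]}" "xs \<in> tree_verts d h" "length xs < h"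
         "even (h - 1 - length xs)" "i < (2::nat)" using eM by (rule M0_E)
      have e: "e = {xs, xs @ [i]}" "length xs < h" "even (h - 1 - length xs)"
        "i < 2" "v \<in> e" using e0 ve by simp_all
      show "e \<in> {{butlast v, v}}"
      proof (cases "v = xs")
        case True thus ?thesis using e False by auto
      next
        case False
        hence "v = xs @ [i]" using e by auto
        thus ?thesis using e by auto
      qed
    qed
    hence "card ?S \<le> card {{butlast v, v}}" by (intro card_mono) auto
    thus ?thesis by simp
  qed
qed

lemma M0_level:
  assumes k: "k < h"
  shows "card {e \<in> M0 d h. lev e = k} = (if even (h - 1 - k) then 2 * (d-1)^k else 0)"
proof -
  have eq: "{e \<in> M0 d h. lev e = k} = (\<lambda>(xs,i). {xs, xs @ [i]}) `
     ((if even (h - 1 - k) then {xs \<in> tree_verts d h. length xs = k} else {}) \<times> {..<2::nat})"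
    unfolding M0_def using k by (auto split: if_splits)
  have inj: "inj_on (\<lambda>(xs,i). {xs, xs @ [i::nat]}) X" for X
    by (auto simp: inj_on_def dest: edge_inj)
  show ?thesis unfolding eq card_image[OF inj]
    using card_level[of k h d] k by (simp add: card_cartesian_product)
qed

lemma sum_M0:
  "(\<Sum>k<n. if even (n - 1 - k) then 2 * q^k else 0) = B q n"
proof (induction q n rule: B.induct)
  case (3 q n)
  have "(\<Sum>k<Suc (Suc n). if even (Suc (Suc n) - 1 - k) then 2 * q^k else 0) =
        (\<Sum>k<n. if even (Suc (Suc n) - 1 - k) then 2 * q^k else (0::nat)) + 2 * q ^ Suc n"
    by simp
  also have "(\<Sum>k<n. if even (Suc (Suc n) - 1 - k) then 2 * q^k else (0::nat)) =
        (\<Sum>k<n. if even (n - 1 - k) then 2 * q^k else 0)"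
  proof (intro sum.cong refl)
    fix k assume "k \<in> {..<n}"
    hence "Suc (Suc n) - 1 - k = (n - 1 - k) + 2" by auto
    thus "(if even (Suc (Suc n) - 1 - k) then 2 * q^k else (0::nat)) =
          (if even (n - 1 - k) then 2 * q^k else 0)" by simp
  qed
  finally show ?case using 3 by simp
qed auto

lemma nu2_eq:
  assumes "d \<ge> 3" "h \<ge> 1"
  shows "nu2 (tree_edges d h) = B (d-1) h"
proof -
  let ?S = "{card M | M. two_matching (tree_edges d h) M}"
  have fin: "finite ?S"
  proof -
    have "?S \<subseteq> card ` Pow (tree_edges d h)" unfolding two_matching_def by auto
    thus ?thesis using finite_edges by (meson finite_Pow_iff finite_imageI finite_subset)
  qed
  have c0: "card (M0 d h) = B (d-1) h"
  proof -
    have "card (M0 d h) = (\<Sum>k<h. card {e \<in> M0 d h. lev e = k})"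
      using levels_sum[OF M0_sub[OF assms(1)]] .
    also have "\<dots> = (\<Sum>k<h. if even (h - 1 - k) then 2 * (d-1)^k else 0)"
      by (intro sum.cong refl) (simp add: M0_level del: dvd_diff_nat)
    also have "\<dots> = B (d-1) h" by (rule sum_M0)
    finally show ?thesis .
  qed
  have "card (M0 d h) \<in> ?S" using M0_tm[OF assms(1)] by blast
  hence mem: "B (d-1) h \<in> ?S" using c0 by simp
  have ub: "\<And>x. x \<in> ?S \<Longrightarrow> x \<le> B (d-1) h" using upper assms(2) by blast
  show ?thesis unfolding nu2_def by (rule Max_eqI[OF fin ub mem])
qed

theorem lemma5p4:
  fixes d h :: nat
  assumes "d \<ge> 3" and "h \<ge> 2"
  shows "real (nu2 (tree_edges d h)) =
    (if even h
     then 2 * ((real d - 1) ^ (h + 1) - (real d - 1)) / ((real d - 1)^2 - 1)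
     else 2 * ((real d - 1) ^ (h + 1) - 1) / ((real d - 1)^2 - 1))"
proof -
  have q: "real (d - 1) = real d - 1" using assms by simp
  have "(real d - 1) ^ 2 > 1 ^ 2" using assms by (intro power_strict_mono) auto
  hence nz: "(real d - 1)^2 - 1 \<noteq> 0" by simp
  have "real (nu2 (tree_edges d h)) = real (B (d-1) h)" using nu2_eq assms by simp
  moreover have "real (B (d-1) h) = (if even h
     then 2 * ((real d - 1) ^ (h + 1) - (real d - 1)) else 2 * ((real d - 1) ^ (h + 1) - 1))
       / ((real d - 1)^2 - 1)"
    using B_real[of "d-1" h] nz unfolding q by (simp add: eq_divide_eq)
  ultimately show ?thesis by simp
qed

end
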